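(* Let $G$ be a locally nilpotent profinite group. Then there exist a positive integer $n$, elements $g_1,g_2\in G$ and an open subgroup $H\leq G$ such that $[g_1h_1,{}_n\,g_2h_2]=1$ for all $h_1,h_2\in H$.
   Context: For elements $x,y$ of a group, $[x,{}_0y]=x$ and $[x,{}_ny]=[[x,{}_{n-1}y],y]$ for $n\geq1$, where $[u,v]=u^{-1}v^{-1}uv$. A group is locally nilpotent if every finitely generated subgroup is nilpotent. *)

theory Defs
  imports "HOL-Analysis.Analysis" "HOL-Algebra.Algebra"
begin

definition gcomm :: "('a, 'b) monoid_scheme \<Rightarrow> 'a \<Rightarrow> 'a \<Rightarrow> 'a" where
  "gcomm G u v = inv\<^bsub>G\<^esub> u \<otimes>\<^bsub>G\<^esub> inv\<^bsub>G\<^esub> v \<otimes>\<^bsub>G\<^esub> u \<otimes>\<^bsub>G\<^esub> v"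

primrec iter_comm :: "('a, 'b) monoid_scheme \<Rightarrow> 'a \<Rightarrow> 'a \<Rightarrow> nat \<Rightarrow> 'a" where
  "iter_comm G x y 0 = x"
| "iter_comm G x y (Suc n) = gcomm G (iter_comm G x y n) y"

primrec lower_central :: "('a, 'b) monoid_scheme \<Rightarrow> 'a set \<Rightarrow> nat \<Rightarrow> 'a set" where
  "lower_central G H 0 = H"
| "lower_central G H (Suc i) =
     generate G {gcomm G x y | x y. x \<in> lower_central G H i \<and> y \<in> H}"

definition nilpotent_subgroup :: "('a, 'b) monoid_scheme \<Rightarrow> 'a set \<Rightarrow> bool" where
  "nilpotent_subgroup G H \<longleftrightarrow> (\<exists>c. lower_central G H c = {\<one>\<^bsub>G\<^esub>})"

definition locally_nilpotent :: "('a, 'b) monoid_scheme \<Rightarrow> bool" where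
  "locally_nilpotent G \<longleftrightarrow>
     (\<forall>S. finite S \<and> S \<subseteq> carrier G \<longrightarrow> nilpotent_subgroup G (generate G S))"

definition topological_group :: "('a, 'b) monoid_scheme \<Rightarrow> 'a topology \<Rightarrow> bool" where
  "topological_group G T \<longleftrightarrow> group G \<and> topspace T = carrier G \<and>
     continuous_map (prod_topology T T) T (\<lambda>(x, y). x \<otimes>\<^bsub>G\<^esub> y) \<and>
     continuous_map T T (\<lambda>x. inv\<^bsub>G\<^esub> x)"

definition totally_disconnected_space :: "'a topology \<Rightarrow> bool" where
  "totally_disconnected_space T \<longleftrightarrow>
     (\<forall>x \<in> topspace T. connected_component_of_set T x = {x})"

definition profinite_group :: "('a, 'b) monoid_scheme \<Rightarrow> 'a topology \<Rightarrow> bool" where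
  "profinite_group G T \<longleftrightarrow> topological_group G T \<and> compact_space T \<and>
     Hausdorff_space T \<and> totally_disconnected_space T"

end

theory Submission
  imports Defs
begin


lemma clopen_nbhd:
  assumes cs: "compact_space Tp" and hs: "Hausdorff_space Tp"
    and td: "\<forall>x\<in>topspace Tp. connected_component_of_set Tp x = {x}"
    and W: "openin Tp W" and xW: "x \<in> W"
  shows "\<exists>C. closedin Tp C \<and> openin Tp C \<and> x \<in> C \<and> C \<subseteq> W"
proof -
  define \<C> where "\<C> = {C. closedin Tp C \<and> openin Tp C \<and> x \<in> C}"
  define Q where "Q = \<Inter>\<C>"
  have xtop: "x \<in> topspace Tp" using W xW openin_subset by blast
  have topC: "topspace Tp \<in> \<C>" using xtop by (simp add: \<C>_def)
  have xQ: "x \<in> Q" by (auto simp: Q_def \<C>_def)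
  have Qsub: "Q \<subseteq> topspace Tp" using topC Q_def by blast
  have Qcl: "closedin Tp Q" unfolding Q_def
    using topC by (intro closedin_Inter) (auto simp: \<C>_def)
  have fin: "\<exists>C. C \<in> \<C> \<and> C \<subseteq> Z"
    if F: "finite F" "F \<subseteq> insert (topspace Tp - Z) \<C>" "\<Inter>F = {}" for F Z
  proof -
    define C where "C = \<Inter>(insert (topspace Tp) (F - {topspace Tp - Z}))"
    have FC: "F - {topspace Tp - Z} \<subseteq> \<C>" using F by blast
    have "closedin Tp C" unfolding C_def
      using FC by (intro closedin_Inter) (auto simp: \<C>_def)
    moreover have "openin Tp C" unfolding C_def
      using FC F(1) by (intro openin_Inter) (auto simp: \<C>_def)
    moreover have "x \<in> C" using FC xtop by (auto simp: C_def \<C>_def)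
    moreover have "C \<subseteq> Z"
    proof
      fix y assume y: "y \<in> C"
      show "y \<in> Z"
      proof (rule ccontr)
        assume "y \<notin> Z"
        have "y \<in> S" if "S \<in> F" for S
        proof (cases "S = topspace Tp - Z")
          case True
          then show ?thesis using y \<open>y \<notin> Z\<close> by (simp add: C_def)
        next
          case False
          then show ?thesis using y that by (simp add: C_def)
        qed
        then have "y \<in> \<Inter>F" by blast
        then show False using F by simp
      qed
    qed
    ultimately show ?thesis unfolding \<C>_def by blast
  qed
  have fip: "\<exists>F. finite F \<and> F \<subseteq> \<U> \<and> \<Inter>F = {}"
    if "\<forall>C\<in>\<U>. closedin Tp C" "\<Inter>\<U> = {}" for \<U>
  proof (rule ccontr)
    assume "\<not> ?thesis"
    then have "\<forall>F. finite F \<and> F \<subseteq> \<U> \<longrightarrow> \<Inter>F \<noteq> {}" by blast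
    then show False using cs[unfolded compact_space_fip, rule_format, of \<U>] that by blast
  qed
  have key: "B \<inter> Q = {}"
    if A: "closedin Tp A" and B: "closedin Tp B" and QAB: "Q \<subseteq> A \<union> B"
      and dis: "A \<inter> B \<inter> Q = {}" and xA: "x \<in> A" for A B
  proof -
    have "normal_space Tp" using cs hs compact_Hausdorff_or_regular_imp_normal_space by blast
    moreover have "closedin Tp (A \<inter> Q)" "closedin Tp (B \<inter> Q)" "disjnt (A \<inter> Q) (B \<inter> Q)"
      using A B Qcl dis by (auto simp: disjnt_def)
    ultimately obtain U V where UV: "openin Tp U" "openin Tp V" "A \<inter> Q \<subseteq> U" "B \<inter> Q \<subseteq> V" "disjnt U V"
      unfolding normal_space_def by metis
    have "\<forall>C\<in>insert (topspace Tp - (U \<union> V)) \<C>. closedin Tp C"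
      using UV by (auto simp: \<C>_def)
    moreover have "\<Inter>(insert (topspace Tp - (U \<union> V)) \<C>) = {}"
      using QAB UV unfolding Q_def by auto
    ultimately obtain F where "finite F" "F \<subseteq> insert (topspace Tp - (U \<union> V)) \<C>" "\<Inter>F = {}"
      using fip by metis
    then obtain C where C: "C \<in> \<C>" "C \<subseteq> U \<union> V" using fin by metis
    have "C \<inter> U = C - V" using C UV by (auto simp: disjnt_def)
    then have "closedin Tp (C \<inter> U)" using C UV by (auto simp: \<C>_def intro: closedin_diff)
    moreover have "openin Tp (C \<inter> U)" using C UV by (auto simp: \<C>_def)
    moreover have "x \<in> C \<inter> U" using C UV xA xQ by (auto simp: \<C>_def)
    ultimately have "C \<inter> U \<in> \<C>" by (simp add: \<C>_def)
    then have "Q \<subseteq> U" unfolding Q_def by blast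
    then show ?thesis using UV by (auto simp: disjnt_def)
  qed
  have "connectedin Tp Q"
    unfolding connectedin_closedin
  proof (intro conjI Qsub notI)
    assume "\<exists>E1 E2. closedin Tp E1 \<and> closedin Tp E2 \<and> Q \<subseteq> E1 \<union> E2 \<and> E1 \<inter> E2 \<inter> Q = {} \<and> E1 \<inter> Q \<noteq> {} \<and> E2 \<inter> Q \<noteq> {}"
    then obtain E1 E2 where E: "closedin Tp E1" "closedin Tp E2" "Q \<subseteq> E1 \<union> E2" "E1 \<inter> E2 \<inter> Q = {}"
       "E1 \<inter> Q \<noteq> {}" "E2 \<inter> Q \<noteq> {}" by blast
    show False
    proof (cases "x \<in> E1")
      case True
      then show ?thesis using key[of E1 E2] E by blast
    next
      case False
      then have "x \<in> E2" using E xQ by blast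
      moreover have "Q \<subseteq> E2 \<union> E1" "E2 \<inter> E1 \<inter> Q = {}" using E by blast+
      ultimately have "E1 \<inter> Q = {}" using key[of E2 E1] E(1,2) by blast
      then show ?thesis using E(5) by blast
    qed
  qed
  then have "Q \<subseteq> connected_component_of_set Tp x"
    by (rule connected_component_of_maximal[OF _ xQ])
  then have "Q \<subseteq> {x}" using td xtop by simp
  then have Qx: "Q = {x}" using xQ by blast
  have "\<forall>C\<in>insert (topspace Tp - W) \<C>. closedin Tp C"
    using W by (auto simp: \<C>_def)
  moreover have "\<Inter>(insert (topspace Tp - W) \<C>) = {}"
    using Qx xW unfolding Q_def by auto
  ultimately obtain F where "finite F" "F \<subseteq> insert (topspace Tp - W) \<C>" "\<Inter>F = {}"
    using fip by metis
  then obtain C where "C \<in> \<C>" "C \<subseteq> W" using fin by metis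
  then show ?thesis by (auto simp: \<C>_def)
qed



lemma tg_mult_cont:
  assumes tg: "topological_group G T" and f: "continuous_map Y T f" and g: "continuous_map Y T g"
  shows "continuous_map Y T (\<lambda>z. f z \<otimes>\<^bsub>G\<^esub> g z)"
proof -
  have "continuous_map Y (prod_topology T T) (\<lambda>z. (f z, g z))"
    using f g by (rule continuous_map_pairedI)
  moreover have "continuous_map (prod_topology T T) T (\<lambda>(x,y). x \<otimes>\<^bsub>G\<^esub> y)"
    using tg by (simp add: topological_group_def)
  ultimately have "continuous_map Y T ((\<lambda>(x,y). x \<otimes>\<^bsub>G\<^esub> y) \<circ> (\<lambda>z. (f z, g z)))"
    by (rule continuous_map_compose)
  then show ?thesis by (simp add: o_def)
qed

lemma tg_inv_cont:
  assumes tg: "topological_group G T" and f: "continuous_map Y T f"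
  shows "continuous_map Y T (\<lambda>z. inv\<^bsub>G\<^esub> (f z))"
proof -
  have "continuous_map T T (\<lambda>x. inv\<^bsub>G\<^esub> x)"
    using tg by (simp add: topological_group_def)
  with f have "continuous_map Y T ((\<lambda>x. inv\<^bsub>G\<^esub> x) \<circ> f)"
    by (rule continuous_map_compose)
  then show ?thesis by (simp add: o_def)
qed

lemma tg_iter_cont:
  assumes tg: "topological_group G T" and f: "continuous_map Y T f" and g: "continuous_map Y T g"
  shows "continuous_map Y T (\<lambda>z. iter_comm G (f z) (g z) n)"
proof (induction n)
  case 0
  then show ?case using f by simp
next
  case (Suc n)
  have c1: "continuous_map Y T (\<lambda>z. inv\<^bsub>G\<^esub> (iter_comm G (f z) (g z) n))"
    by (rule tg_inv_cont[OF tg Suc])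
  have c2: "continuous_map Y T (\<lambda>z. inv\<^bsub>G\<^esub> (g z))"
    by (rule tg_inv_cont[OF tg g])
  have c3: "continuous_map Y T (\<lambda>z. inv\<^bsub>G\<^esub> (iter_comm G (f z) (g z) n) \<otimes>\<^bsub>G\<^esub> inv\<^bsub>G\<^esub> (g z))"
    by (rule tg_mult_cont[OF tg c1 c2])
  have c4: "continuous_map Y T (\<lambda>z. inv\<^bsub>G\<^esub> (iter_comm G (f z) (g z) n) \<otimes>\<^bsub>G\<^esub> inv\<^bsub>G\<^esub> (g z) \<otimes>\<^bsub>G\<^esub> iter_comm G (f z) (g z) n)"
    by (rule tg_mult_cont[OF tg c3 Suc])
  have c5: "continuous_map Y T (\<lambda>z. inv\<^bsub>G\<^esub> (iter_comm G (f z) (g z) n) \<otimes>\<^bsub>G\<^esub> inv\<^bsub>G\<^esub> (g z) \<otimes>\<^bsub>G\<^esub> iter_comm G (f z) (g z) n \<otimes>\<^bsub>G\<^esub> g z)"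
    by (rule tg_mult_cont[OF tg c4 g])
  then show ?case by (simp add: gcomm_def)
qed

lemma tg_lmult_cont:
  assumes tg: "topological_group G T" and a: "a \<in> carrier G"
  shows "continuous_map T T (\<lambda>x. a \<otimes>\<^bsub>G\<^esub> x)"
proof -
  have "topspace T = carrier G" using tg by (simp add: topological_group_def)
  then have c: "continuous_map T T (\<lambda>x. a)" using a by simp
  show ?thesis using tg_mult_cont[OF tg c continuous_map_id] by simp
qed

lemma open_subgroup_in_clopen:
  assumes tg: "topological_group G T" and cs: "compact_space T"
    and Ccl: "closedin T C" and Cop: "openin T C" and oneC: "\<one>\<^bsub>G\<^esub> \<in> C"
  shows "\<exists>H. subgroup H G \<and> openin T H \<and> H \<subseteq> C"
proof -
  have grp: "group G" and top: "topspace T = carrier G"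
    and mc: "continuous_map (prod_topology T T) T (\<lambda>(x,y). x \<otimes>\<^bsub>G\<^esub> y)"
    and ic: "continuous_map T T (\<lambda>x. inv\<^bsub>G\<^esub> x)"
    using tg by (auto simp: topological_group_def)
  have Csub: "C \<subseteq> carrier G" using Cop openin_subset top by blast
  define P where "P = {z \<in> topspace (prod_topology T T). (\<lambda>(x,y). x \<otimes>\<^bsub>G\<^esub> y) z \<in> C}"
  have Pop: "openin (prod_topology T T) P"
    unfolding P_def by (rule openin_continuous_map_preimage[OF mc Cop])
  have "\<exists>A V. openin T A \<and> openin T V \<and> c \<in> A \<and> \<one>\<^bsub>G\<^esub> \<in> V \<and> A \<times> V \<subseteq> P" if c: "c \<in> C" for c
  proof -
    have "c \<in> carrier G" using c Csub by blast
    then have "(c, \<one>\<^bsub>G\<^esub>) \<in> P" using c grp top by (simp add: P_def group.is_monoid monoid.r_one)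
    then show ?thesis using Pop unfolding openin_prod_topology_alt by blast
  qed
  then obtain A V where AV: "\<And>c. c \<in> C \<Longrightarrow> openin T (A c) \<and> openin T (V c) \<and> c \<in> A c \<and> \<one>\<^bsub>G\<^esub> \<in> V c \<and> A c \<times> V c \<subseteq> P"
    by metis
  have "compactin T C" using closedin_compact_space cs Ccl by blast
  moreover have "\<forall>U\<in>A ` C. openin T U" "C \<subseteq> \<Union>(A ` C)" using AV by auto
  ultimately obtain \<F> where "finite \<F>" "\<F> \<subseteq> A ` C" "C \<subseteq> \<Union>\<F>"
    unfolding compactin_def by meson
  then obtain K where K: "finite K" "K \<subseteq> C" "C \<subseteq> \<Union>(A ` K)"
    by (metis finite_subset_image)
  define V0 where "V0 = \<Inter>(insert (topspace T) (V ` K))"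
  have V0op: "openin T V0" unfolding V0_def
    using K AV by (intro openin_Inter) auto
  have oneV0: "\<one>\<^bsub>G\<^esub> \<in> V0" unfolding V0_def using K AV top grp
    by (auto simp: group.is_monoid monoid.one_closed)
  have V0: "c \<otimes>\<^bsub>G\<^esub> v \<in> C" if cv: "c \<in> C" "v \<in> V0" for c v
  proof -
    obtain k where k: "k \<in> K" "c \<in> A k" using K cv by blast
    then have "v \<in> V k" using cv unfolding V0_def by blast
    then have "(c, v) \<in> P" using AV[of k] k K by blast
    then show ?thesis by (simp add: P_def)
  qed
  define W where "W = {v \<in> V0. inv\<^bsub>G\<^esub> v \<in> V0}"
  have Wop: "openin T W"
  proof -
    have "openin T {x \<in> topspace T. inv\<^bsub>G\<^esub> x \<in> V0}"
      by (rule openin_continuous_map_preimage[OF ic V0op])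
    then have "openin T (V0 \<inter> {x \<in> topspace T. inv\<^bsub>G\<^esub> x \<in> V0})"
      using V0op by blast
    moreover have "V0 \<inter> {x \<in> topspace T. inv\<^bsub>G\<^esub> x \<in> V0} = W"
      using openin_subset[OF V0op] by (auto simp: W_def)
    ultimately show ?thesis by simp
  qed
  have Wsub: "W \<subseteq> carrier G" using openin_subset[OF V0op] top by (auto simp: W_def)
  have oneW: "\<one>\<^bsub>G\<^esub> \<in> W" using oneV0 grp by (simp add: W_def group.is_monoid monoid.inv_one)
  define H where "H = generate G W"
  have sg: "subgroup H G" unfolding H_def using grp Wsub by (simp add: group.generate_is_subgroup)
  have Hcar: "H \<subseteq> carrier G" using sg by (simp add: subgroup.subset)
  have HC0: "\<forall>c\<in>C. c \<otimes>\<^bsub>G\<^esub> h \<in> C" if "h \<in> H" for h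
    using that unfolding H_def
  proof (induction h rule: generate.induct)
    case one
    then show ?case using Csub grp by (auto simp: group.is_monoid monoid.r_one)
  next
    case (incl h)
    then show ?case using V0 W_def by blast
  next
    case (inv h)
    then show ?case using V0 W_def by blast
  next
    case (eng h1 h2)
    have "h1 \<in> carrier G" "h2 \<in> carrier G" using eng.hyps Hcar H_def by auto
    then show ?case using eng.IH Csub grp by (auto simp: group.is_monoid monoid.m_assoc[symmetric])
  qed
  have HC: "H \<subseteq> C"
  proof
    fix h assume h: "h \<in> H"
    have "h \<in> carrier G" using h Hcar by blast
    then have "\<one>\<^bsub>G\<^esub> \<otimes>\<^bsub>G\<^esub> h = h" using grp by (simp add: group.is_monoid monoid.l_one)
    then show "h \<in> C" using HC0[OF h] oneC by metis
  qed
  have "openin T H"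
  proof (subst openin_subopen, intro ballI)
    fix h assume h: "h \<in> H"
    have hc: "h \<in> carrier G" "inv\<^bsub>G\<^esub> h \<in> carrier G" using h Hcar grp by (auto simp: group.inv_closed)
    define U where "U = {x \<in> topspace T. inv\<^bsub>G\<^esub> h \<otimes>\<^bsub>G\<^esub> x \<in> W}"
    have "openin T U" unfolding U_def
      by (rule openin_continuous_map_preimage[OF tg_lmult_cont[OF tg hc(2)] Wop])
    moreover have "h \<in> U" using hc top oneW grp by (simp add: U_def group.l_inv)
    moreover have "U \<subseteq> H"
    proof
      fix x assume x: "x \<in> U"
      then have xc: "x \<in> carrier G" and w: "inv\<^bsub>G\<^esub> h \<otimes>\<^bsub>G\<^esub> x \<in> H"
        using top generate.incl[of _ W G] by (auto simp: U_def H_def)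
      have "h \<otimes>\<^bsub>G\<^esub> (inv\<^bsub>G\<^esub> h \<otimes>\<^bsub>G\<^esub> x) \<in> H"
        using sg h w by (simp add: subgroup.m_closed)
      moreover have "h \<otimes>\<^bsub>G\<^esub> (inv\<^bsub>G\<^esub> h \<otimes>\<^bsub>G\<^esub> x) = x"
      proof -
        have ic: "inv\<^bsub>G\<^esub> h \<otimes>\<^bsub>G\<^esub> x \<in> carrier G"
          using grp hc xc by (simp add: group.is_monoid monoid.m_closed)
        show ?thesis using group.inv_solve_left'[OF grp ic hc(1) xc] by simp
      qed
      ultimately show "x \<in> H" by simp
    qed
    ultimately show "\<exists>U. openin T U \<and> h \<in> U \<and> U \<subseteq> H" by blast
  qed
  then show ?thesis using sg HC by blast
qed



lemma iter_in_lc: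
  assumes "x \<in> H" "y \<in> H"
  shows "iter_comm G x y k \<in> lower_central G H k"
proof (induction k)
  case 0
  then show ?case using assms by simp
next
  case (Suc k)
  then show ?case using assms(2) by (auto intro!: generate.incl)
qed

lemma ln_engel:
  assumes grp: "group G" and ln: "locally_nilpotent G"
    and x: "x \<in> carrier G" and y: "y \<in> carrier G"
  shows "\<exists>n. iter_comm G x y (Suc n) = \<one>\<^bsub>G\<^esub>"
proof -
  define H where "H = generate G {x, y}"
  have "nilpotent_subgroup G H" using ln x y unfolding locally_nilpotent_def H_def by simp
  then obtain c where c: "lower_central G H c = {\<one>\<^bsub>G\<^esub>}" unfolding nilpotent_subgroup_def by blast
  have "x \<in> H" "y \<in> H" unfolding H_def by (auto intro: generate.incl)
  then have "iter_comm G x y c = \<one>\<^bsub>G\<^esub>" using iter_in_lc[of x H y G c] c by simp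
  then have "iter_comm G x y (Suc c) = inv\<^bsub>G\<^esub> \<one>\<^bsub>G\<^esub> \<otimes>\<^bsub>G\<^esub> inv\<^bsub>G\<^esub> y \<otimes>\<^bsub>G\<^esub> \<one>\<^bsub>G\<^esub> \<otimes>\<^bsub>G\<^esub> y"
    by (simp add: gcomm_def)
  also have "\<dots> = \<one>\<^bsub>G\<^esub>"
  proof -
    interpret group G by (rule grp)
    show ?thesis using y by simp
  qed
  finally show ?thesis by blast
qed


theorem lemma2p5:
  fixes G :: "('a, 'b) monoid_scheme" and T :: "'a topology"
  assumes "profinite_group G T"
    and "locally_nilpotent G"
  shows "\<exists>n::nat. n > 0 \<and> (\<exists>g1 \<in> carrier G. \<exists>g2 \<in> carrier G. \<exists>H.
           subgroup H G \<and> openin T H \<and>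
           (\<forall>h1 \<in> H. \<forall>h2 \<in> H.
              iter_comm G (g1 \<otimes>\<^bsub>G\<^esub> h1) (g2 \<otimes>\<^bsub>G\<^esub> h2) n = \<one>\<^bsub>G\<^esub>))"
proof -
  have tg: "topological_group G T" and cs: "compact_space T" and hs: "Hausdorff_space T"
    and td: "\<forall>x\<in>topspace T. connected_component_of_set T x = {x}"
    using assms(1) by (auto simp: profinite_group_def totally_disconnected_space_def)
  have grp: "group G" and top: "topspace T = carrier G"
    using tg by (auto simp: topological_group_def)
  have one: "\<one>\<^bsub>G\<^esub> \<in> carrier G" using grp by (simp add: group.is_monoid monoid.one_closed)
  define X2 where "X2 = prod_topology T T"
  define E where "E n = {z \<in> topspace X2. iter_comm G (fst z) (snd z) (Suc n) \<in> {\<one>\<^bsub>G\<^esub>}}" for n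
  have Ecl: "closedin X2 (E n)" for n
  proof -
    have "continuous_map X2 T (\<lambda>z. iter_comm G (fst z) (snd z) (Suc n))"
      unfolding X2_def by (rule tg_iter_cont[OF tg continuous_map_fst continuous_map_snd])
    moreover have "closedin T {\<one>\<^bsub>G\<^esub>}" using hs one top closedin_Hausdorff_singleton by metis
    ultimately show ?thesis unfolding E_def by (rule closedin_continuous_map_preimage)
  qed
  have Ecov: "\<Union>(range E) = topspace X2"
  proof
    show "\<Union>(range E) \<subseteq> topspace X2" unfolding E_def by blast
    show "topspace X2 \<subseteq> \<Union>(range E)"
    proof
      fix z assume z: "z \<in> topspace X2"
      then have "fst z \<in> carrier G" "snd z \<in> carrier G" using top unfolding X2_def
        by (auto simp: mem_Times_iff)
      then obtain n where "iter_comm G (fst z) (snd z) (Suc n) = \<one>\<^bsub>G\<^esub>"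
        using ln_engel[OF grp assms(2)] by blast
      then have "z \<in> E n" using z by (simp add: E_def)
      then show "z \<in> \<Union>(range E)" by blast
    qed
  qed
  have X2sp: "locally_compact_space X2 \<and> regular_space X2"
  proof -
    have "compact_space X2" "Hausdorff_space X2" unfolding X2_def
      using cs hs by (auto simp: compact_space_prod_topology Hausdorff_space_prod_topology)
    then show ?thesis using compact_imp_locally_compact_space compact_Hausdorff_imp_regular_space by blast
  qed
  have "\<exists>n. X2 interior_of E n \<noteq> {}"
  proof (rule ccontr)
    assume "\<not> ?thesis"
    then have ES: "\<And>S. S \<in> range E \<Longrightarrow> closedin X2 S \<and> X2 interior_of S = {}" using Ecl by auto
    have cnt: "countable (range E)" by simp
    have "X2 interior_of \<Union>(range E) = {}"
      by (rule Baire_category_alt[OF disjI2[OF X2sp] cnt ES])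
    then have "topspace X2 = {}" using Ecov by simp
    moreover have "(\<one>\<^bsub>G\<^esub>, \<one>\<^bsub>G\<^esub>) \<in> topspace X2" using one top by (simp add: X2_def)
    ultimately show False by blast
  qed
  then obtain n z where z: "z \<in> X2 interior_of E n" by blast
  obtain g1 g2 where gz: "z = (g1, g2)" by (cases z)
  have gi: "(g1, g2) \<in> X2 interior_of E n" using z gz by simp
  have "openin (prod_topology T T) (X2 interior_of E n)" unfolding X2_def by (rule openin_interior_of)
  then have "\<forall>x y. (x,y) \<in> X2 interior_of E n \<longrightarrow> (\<exists>U V. openin T U \<and> openin T V \<and> x \<in> U \<and> y \<in> V \<and> U \<times> V \<subseteq> X2 interior_of E n)"
    by (simp only: openin_prod_topology_alt)
  then have "\<exists>U V. openin T U \<and> openin T V \<and> g1 \<in> U \<and> g2 \<in> V \<and> U \<times> V \<subseteq> X2 interior_of E n"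
    using gi by blast
  then obtain U1 U2 where U: "openin T U1" "openin T U2" "g1 \<in> U1" "g2 \<in> U2"
    "U1 \<times> U2 \<subseteq> X2 interior_of E n" by blast
  have "X2 interior_of E n \<subseteq> E n" by (rule interior_of_subset)
  then have UE: "U1 \<times> U2 \<subseteq> E n" using U(5) by (rule_tac subset_trans) auto
  have "U1 \<subseteq> carrier G" "U2 \<subseteq> carrier G" using openin_subset[OF U(1)] openin_subset[OF U(2)] top by auto
  then have g1c: "g1 \<in> carrier G" and g2c: "g2 \<in> carrier G" using U(3,4) by blast+
  define N where "N = {h \<in> topspace T. g1 \<otimes>\<^bsub>G\<^esub> h \<in> U1} \<inter> {h \<in> topspace T. g2 \<otimes>\<^bsub>G\<^esub> h \<in> U2}"
  have Nop: "openin T N" unfolding N_def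
    using openin_continuous_map_preimage[OF tg_lmult_cont[OF tg g1c] U(1)]
      openin_continuous_map_preimage[OF tg_lmult_cont[OF tg g2c] U(2)] by blast
  have oneN: "\<one>\<^bsub>G\<^esub> \<in> N" using one top U g1c g2c grp
    by (simp add: N_def group.is_monoid monoid.r_one)
  obtain C where C: "closedin T C" "openin T C" "\<one>\<^bsub>G\<^esub> \<in> C" "C \<subseteq> N"
    using clopen_nbhd[OF cs hs td Nop oneN] by blast
  obtain H where H: "subgroup H G" "openin T H" "H \<subseteq> C"
    using open_subgroup_in_clopen[OF tg cs C(1,2,3)] by blast
  have "iter_comm G (g1 \<otimes>\<^bsub>G\<^esub> h1) (g2 \<otimes>\<^bsub>G\<^esub> h2) (Suc n) = \<one>\<^bsub>G\<^esub>"
    if "h1 \<in> H" "h2 \<in> H" for h1 h2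
  proof -
    have "h1 \<in> N" "h2 \<in> N" using that H C by blast+
    then have "(g1 \<otimes>\<^bsub>G\<^esub> h1, g2 \<otimes>\<^bsub>G\<^esub> h2) \<in> U1 \<times> U2" by (simp add: N_def)
    then have "(g1 \<otimes>\<^bsub>G\<^esub> h1, g2 \<otimes>\<^bsub>G\<^esub> h2) \<in> E n" using UE by blast
    then show ?thesis by (simp add: E_def)
  qed
  then show ?thesis using g1c g2c H by blast
qed

end
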